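(* Let $\tau\subset\mathbb{Z}^4_{\ge0}$ be a B-facet which has an internal V-face consisting of exactly three (affinely independent) points. Then $\tau$ is a $B_1$-facet, or a $B_2$-facet, or the standard cross-polytope $\{(1,1,0,0),(1,0,1,0),(1,0,0,1),(0,1,1,0),(0,1,0,1),(0,0,1,1)\}$.
   Context: A polytope is a finite subset of $\mathbb{Z}^n$; its dimension is the dimension of its affine span; a face of a finite set $S$ is $S\cap G$ for a face $G$ of the convex hull of $S$. A $k$-simplex is a set of $k+1$ affinely independent points; a $k$-simplex $S\subset\mathbb{Z}^n_{\ge0}$ is a B-simplex if there is an index $i$ with exactly $k$ vertices in $\{x_i=0\}$ and the remaining vertex having $x_i=1$. A B-facet in $\mathbb{Z}^n_{\ge0}$ is a finite set $\tau\subset\mathbb{Z}^n_{\ge0}$ whose affine span is a hyperplane $\{\langle a,x\rangle=b\}$ with all $a_j>0$, such that every $(n-1)$-simplex with vertices in $\tau$ is a B-simplex. A face $F$ of $\tau$ is a V-face if it is contained in a coordinate subspace (linear span of some standard basis vectors) of dimension $\dim F+1$; a V-face $F$ is internal if no nonempty proper face of $F$ is a V-face. $\tau\subset\mathbb{Z}^4_{\ge0}$ is a $B_1$-facet if there is an index $i$ such that exactly one point of $\tau$ has nonzero $x_i$, and it has $x_i=1$; it is a $B_2$-facet if there are distinct indices $i,j$ with $(x_i,x_j)\in\{(0,0),(1,0),(0,1)\}$ for all $x\in\tau$. *)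

theory Defs
  imports "HOL-Analysis.Analysis"
begin

text \<open>Points of Z^4 are represented as vectors in real^4 with nonnegative integer coordinates.\<close>

definition lattice_nonneg :: "(real^4) set" where
  "lattice_nonneg = {x. \<forall>i. x $ i \<in> \<int> \<and> x $ i \<ge> 0}"

definition face_set :: "(real^4) set \<Rightarrow> (real^4) set \<Rightarrow> bool" where
  "face_set F S \<longleftrightarrow> (\<exists>G. G face_of convex hull S \<and> F = S \<inter> G)"

definition B_simplex :: "(real^4) set \<Rightarrow> bool" where
  "B_simplex S \<longleftrightarrow> (\<exists>i. card {x\<in>S. x $ i = 0} = card S - 1 \<and>
                        (\<forall>x\<in>S. x $ i \<noteq> 0 \<longrightarrow> x $ i = 1))"

definition B_facet :: "(real^4) set \<Rightarrow> bool" where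
  "B_facet \<tau> \<longleftrightarrow> finite \<tau> \<and> \<tau> \<subseteq> lattice_nonneg \<and>
     (\<exists>a b. (\<forall>j. a $ j > 0) \<and> affine hull \<tau> = {x. a \<bullet> x = b}) \<and>
     (\<forall>S. S \<subseteq> \<tau> \<and> card S = 4 \<and> \<not> affine_dependent S \<longrightarrow> B_simplex S)"

definition V_face :: "(real^4) set \<Rightarrow> (real^4) set \<Rightarrow> bool" where
  "V_face \<tau> F \<longleftrightarrow> face_set F \<tau> \<and>
     (\<exists>I::4 set. int (card I) = aff_dim F + 1 \<and> F \<subseteq> span ((\<lambda>i. axis i 1) ` I))"

definition internal_V_face :: "(real^4) set \<Rightarrow> (real^4) set \<Rightarrow> bool" where
  "internal_V_face \<tau> F \<longleftrightarrow> V_face \<tau> F \<and>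
     (\<forall>G. face_set G F \<and> G \<noteq> {} \<and> G \<noteq> F \<longrightarrow> \<not> V_face \<tau> G)"

definition B1_facet :: "(real^4) set \<Rightarrow> bool" where
  "B1_facet \<tau> \<longleftrightarrow> (\<exists>i. \<exists>p\<in>\<tau>. p $ i = 1 \<and> (\<forall>x\<in>\<tau>. x $ i \<noteq> 0 \<longrightarrow> x = p))"

definition B2_facet :: "(real^4) set \<Rightarrow> bool" where
  "B2_facet \<tau> \<longleftrightarrow> (\<exists>i j. i \<noteq> j \<and>
     (\<forall>x\<in>\<tau>. (x $ i, x $ j) \<in> {(0,0),(1,0),(0,1)}))"

definition cross_polytope :: "(real^4) set" where
  "cross_polytope = {vector [1,1,0,0], vector [1,0,1,0], vector [1,0,0,1],
                     vector [0,1,1,0], vector [0,1,0,1], vector [0,0,1,1]}"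

end

theory Submission
  imports Defs
begin



lemma span_axes:
  fixes x :: "real^'n"
  shows "x \<in> span ((\<lambda>i. axis i 1) ` I) \<longleftrightarrow> (\<forall>j. j \<notin> I \<longrightarrow> x$j = 0)"
proof
  assume "x \<in> span ((\<lambda>i. axis i 1) ` I)"
  moreover have "subspace {y::real^'n. \<forall>j. j \<notin> I \<longrightarrow> y$j = 0}"
    by (auto simp: subspace_def)
  moreover have "(\<lambda>i. axis i 1) ` I \<subseteq> {y::real^'n. \<forall>j. j \<notin> I \<longrightarrow> y$j = 0}"
    by (auto simp: axis_def)
  ultimately show "\<forall>j. j \<notin> I \<longrightarrow> x$j = 0"
    using span_minimal by blast
next
  assume h: "\<forall>j. j \<notin> I \<longrightarrow> x$j = 0"
  have "x = (\<Sum>i\<in>I. x$i *\<^sub>R axis i 1)"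
    using h by (auto simp: vec_eq_iff sum_component axis_def if_distrib sum.delta cong: if_cong)
  also have "\<dots> \<in> span ((\<lambda>i. axis i 1) ` I)"
    by (intro span_sum span_mul span_base) auto
  finally show "x \<in> span ((\<lambda>i. axis i 1) ` I)" .
qed

lemma indep_insert_coord:
  fixes S :: "(real^'n) set"
  assumes "\<not> affine_dependent S" "\<forall>x\<in>S. x$i = c" "y$i \<noteq> c"
  shows "\<not> affine_dependent (insert y S)"
proof -
  have af: "affine {x::real^'n. x$i = c}"
    using affine_hyperplane[of "axis i (1::real) :: real^'n" c] by (simp add: inner_axis' inner_real_def)
  have "affine hull S \<subseteq> {x. x$i = c}"
    using assms(2) af by (intro hull_minimal) auto
  then have "y \<notin> affine hull S" using assms(3) by (auto simp: inner_axis')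
  then show ?thesis using assms(1) affine_independent_insert by blast
qed

lemma dep_insert_in_hull:
  fixes S :: "'a::euclidean_space set"
  assumes "\<not> affine_dependent S" "affine_dependent (insert y S)"
  shows "y \<in> affine hull S"
  using assms affine_independent_insert by blast

lemma card4_eq3:
  assumes "a \<noteq> b" "a \<noteq> c" "a \<noteq> d" "b \<noteq> c" "b \<noteq> d" "c \<noteq> d"
    and "card {x\<in>{a,b,c,d}. P x} = 3"
  shows "(\<not> P a \<and> P b \<and> P c \<and> P d) \<or> (P a \<and> \<not> P b \<and> P c \<and> P d) \<or>
         (P a \<and> P b \<and> \<not> P c \<and> P d) \<or> (P a \<and> P b \<and> P c \<and> \<not> P d)"
proof -
  have e: "\<And>a A. {x\<in>insert a A. P x} = (if P a then insert a {x\<in>A. P x} else {x\<in>A. P x})"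
    by auto
  have e0: "{x\<in>{}. P x} = {}" by auto
  show ?thesis
    using assms(7) unfolding e e0
    using assms(1-6) by (cases "P a"; cases "P b"; cases "P c"; cases "P d"; simp)
qed

lemma UNIV4:
  fixes i j k :: 4
  assumes "i \<noteq> j" "i \<noteq> k" "j \<noteq> k"
  obtains m where "m \<noteq> i" "m \<noteq> j" "m \<noteq> k" "(UNIV::4 set) = {i,j,k,m}"
proof -
  have c: "card {i,j,k} = 3" using assms by simp
  have "UNIV - {i,j,k} \<noteq> {}"
  proof
    assume "UNIV - {i,j,k} = {}"
    then have "(UNIV::4 set) = {i,j,k}" by auto
    then show False using c by simp
  qed
  then obtain m where m: "m \<notin> {i,j,k}" by auto
  have "card {i,j,k,m} = 4" using assms m by auto
  then have "{i,j,k,m} = (UNIV::4 set)"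
    by (intro card_subset_eq) auto
  then show ?thesis using that m by auto
qed



lemma vector_4:
 "(vector [x,y,z,w] ::('a::zero)^4)$1 = x"
 "(vector [x,y,z,w] ::('a::zero)^4)$2 = y"
 "(vector [x,y,z,w] ::('a::zero)^4)$3 = z"
 "(vector [x,y,z,w] ::('a::zero)^4)$4 = w"
  unfolding vector_def by simp_all

lemma cross_char1:
  assumes "x \<in> cross_polytope"
  shows "(\<forall>j. x$j = 0 \<or> x$j = 1) \<and> x$1 + x$2 + x$3 + x$4 = 2"
  using assms unfolding cross_polytope_def forall_4
  apply (elim insertE emptyE)
  by (simp_all only: vector_4; simp)+

lemma card_cross: "card cross_polytope \<le> 6"
proof -
  have e: "cross_polytope = set [vector [1,1,0,0], vector [1,0,1,0], vector [1,0,0,1],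
                     vector [0,1,1,0], vector [0,1,0,1], vector [0,0,1,1]]"
    unfolding cross_polytope_def by (simp only: list.set)
  show ?thesis unfolding e by (rule order.trans[OF card_length]) simp
qed

lemma cross_mem_aux:
  fixes c1 c2 c3 c4 :: real
  assumes "c1 = 0 \<or> c1 = 1" "c2 = 0 \<or> c2 = 1" "c3 = 0 \<or> c3 = 1" "c4 = 0 \<or> c4 = 1"
    "c1 + c2 + c3 + c4 = 2"
  shows "vector [c1,c2,c3,c4] \<in> cross_polytope"
  using assms unfolding cross_polytope_def
  by (elim disjE; simp only:; simp)

lemma cross_char2:
  fixes x :: "real^4"
  assumes "\<forall>j. x$j = 0 \<or> x$j = 1" "x$1 + x$2 + x$3 + x$4 = 2"
  shows "x \<in> cross_polytope"
proof -
  have e: "x = vector [x$1, x$2, x$3, x$4]"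
    by (simp add: vec_eq_iff forall_4 vector_4)
  show ?thesis
    by (subst e, rule cross_mem_aux) (use assms in auto)
qed

lemma int01: "(t::real) \<in> \<int> \<Longrightarrow> 0 \<le> t \<Longrightarrow> t \<le> 1 \<Longrightarrow> t = 0 \<or> t = 1"
  by (metis Ints_cases of_int_0 of_int_1 of_int_le_iff order_antisym_conv zle_add1_eq_le int_one_le_iff_zero_less not_le of_int_less_iff)




locale cfg =
  fixes T F :: "(real^4) set" and a :: "real^4" and b :: real and k :: 4 and p q r :: "real^4"
  assumes fin: "finite T"
  and lat: "T \<subseteq> lattice_nonneg"
  and apos: "\<forall>j. a$j > 0"
  and hyp: "\<forall>x\<in>T. a \<bullet> x = b"
  and Bs: "\<forall>S. S \<subseteq> T \<and> card S = 4 \<and> \<not> affine_dependent S \<longrightarrow> B_simplex S"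
  and Fdef: "F = {p,q,r}" and pq: "p \<noteq> q" and pr: "p \<noteq> r" and qr: "q \<noteq> r"
  and Fsub: "F \<subseteq> T" and Find: "\<not> affine_dependent F"
  and Fk: "\<forall>x\<in>F. x$k = 0"
  and edge: "\<forall>i x y. i \<noteq> k \<longrightarrow> x \<in> F \<longrightarrow> y \<in> F \<longrightarrow> x \<noteq> y \<longrightarrow> \<not>(x$i = 0 \<and> y$i = 0)"
  and vert: "\<forall>i j x. i \<noteq> k \<longrightarrow> j \<noteq> k \<longrightarrow> i \<noteq> j \<longrightarrow> x \<in> F \<longrightarrow> \<not>(x$i = 0 \<and> x$j = 0)"
  and Vk: "\<forall>v\<in>T. v \<notin> F \<longrightarrow> v$k = 1"
  and Vne: "T - F \<noteq> {}"
begin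

lemma dep_par:
  assumes s: "s \<in> F" and t: "t \<in> F" "s \<noteq> t" and v: "v \<in> T - F" and w: "w \<in> T - F" "v \<noteq> w"
    and dep: "affine_dependent {s,t,v,w}"
  shows "\<exists>\<alpha>. \<alpha> \<noteq> 0 \<and> w - v = \<alpha> *\<^sub>R (s - t)"
proof -
  have vk: "v$k = 1" "w$k = 1" using v w Vk by auto
  have sk: "s$k = 0" "t$k = 0" using s t Fk by auto
  have i3: "\<not> affine_dependent (insert v {s,t})"
    by (rule indep_insert_coord[where i=k and c=0]) (use vk sk in auto)
  have "{s,t,v,w} = insert w (insert v {s,t})" by auto
  then have "affine_dependent (insert w (insert v {s,t}))" using dep by simp
  then have "w \<in> affine hull {v,s,t}" using dep_insert_in_hull[OF i3] by simp
  then obtain u1 u2 u3 where u: "u1 + u2 + u3 = 1" "w = u1 *\<^sub>R v + u2 *\<^sub>R s + u3 *\<^sub>R t"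
    unfolding affine_hull_3 by blast
  have "w$k = u1 * v$k + u2 * s$k + u3 * t$k" using u(2) by simp
  then have "u1 = 1" using vk sk by simp
  then have u3: "u3 = - u2" using u(1) by simp
  have e: "w - v = u2 *\<^sub>R (s - t)"
    using u(2) \<open>u1 = 1\<close> u3 by (simp add: algebra_simps)
  have "u2 \<noteq> 0" using e w(2) by auto
  then show ?thesis using e by blast
qed

lemma not_two_dep:
  assumes F3: "F = {s,t,r'}" "s \<noteq> t" "s \<noteq> r'" "t \<noteq> r'"
    and v: "v \<in> T - F" and w: "w \<in> T - F" "v \<noteq> w"
  shows "\<not> (affine_dependent {s,t,v,w} \<and> affine_dependent {s,r',v,w})"
proof
  assume h: "affine_dependent {s,t,v,w} \<and> affine_dependent {s,r',v,w}"
  obtain \<alpha> where a: "\<alpha> \<noteq> 0" "w - v = \<alpha> *\<^sub>R (s - t)"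
    using dep_par[of s t v w] h F3 v w by auto
  obtain \<beta> where be: "\<beta> \<noteq> 0" "w - v = \<beta> *\<^sub>R (s - r')"
    using dep_par[of s r' v w] h F3 v w by auto
  have eq: "\<alpha> *\<^sub>R (s - t) = \<beta> *\<^sub>R (s - r')" using a be by simp
  have "\<forall>j. r'$j = ((1 - \<alpha>/\<beta>) *\<^sub>R s + (\<alpha>/\<beta>) *\<^sub>R t)$j"
  proof
    fix j
    have "\<alpha> * (s$j - t$j) = \<beta> * (s$j - r'$j)"
      using arg_cong[OF eq, of "\<lambda>x. x$j"] by simp
    then show "r'$j = ((1 - \<alpha>/\<beta>) *\<^sub>R s + (\<alpha>/\<beta>) *\<^sub>R t)$j"
      using be(1) by (simp add: field_simps)
  qed
  then have "r' = (1 - \<alpha>/\<beta>) *\<^sub>R s + (\<alpha>/\<beta>) *\<^sub>R t" by (simp add: vec_eq_iff)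
  then have "r' \<in> affine hull {s,t}" unfolding affine_hull_2 by force
  moreover have "F - {r'} = {s,t}" using F3 by auto
  ultimately have "affine_dependent F" unfolding affine_dependent_def using F3 by auto
  then show False using Find by simp
qed

lemma edgeB:
  assumes s: "s \<in> F" and t: "t \<in> F" "s \<noteq> t" and v: "v \<in> T - F" and w: "w \<in> T - F" "v \<noteq> w"
    and ind: "\<not> affine_dependent {s,t,v,w}"
  shows "\<exists>i. i \<noteq> k \<and> v$i = 0 \<and> w$i = 0 \<and> ((s$i = 0 \<and> t$i = 1) \<or> (s$i = 1 \<and> t$i = 0))"
proof -
  have vk: "v$k = 1" "w$k = 1" using v w Vk by auto
  have sk: "s$k = 0" "t$k = 0" using s t Fk by auto
  have d: "s \<noteq> v" "s \<noteq> w" "t \<noteq> v" "t \<noteq> w" using vk sk by auto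
  have c4: "card {s,t,v,w} = 4" using d t(2) w(2) by auto
  have "{s,t,v,w} \<subseteq> T" using Fsub v w s t by auto
  then have "B_simplex {s,t,v,w}" using Bs c4 ind by blast
  then obtain i where c: "card {x\<in>{s,t,v,w}. x$i = 0} = 3"
      and o: "\<forall>x\<in>{s,t,v,w}. x$i \<noteq> 0 \<longrightarrow> x$i = 1"
    unfolding B_simplex_def using c4 by auto
  have cs: "(\<not> s$i = 0 \<and> t$i = 0 \<and> v$i = 0 \<and> w$i = 0) \<or> (s$i = 0 \<and> \<not> t$i = 0 \<and> v$i = 0 \<and> w$i = 0) \<or>
         (s$i = 0 \<and> t$i = 0 \<and> \<not> v$i = 0 \<and> w$i = 0) \<or> (s$i = 0 \<and> t$i = 0 \<and> v$i = 0 \<and> \<not> w$i = 0)"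
    using card4_eq3[of s t v w "\<lambda>x. x$i = 0", OF t(2) d(1,2) d(3,4) w(2) c] .
  have ik: "i \<noteq> k"
  proof
    assume "i = k"
    then show False using cs vk sk by auto
  qed
  have "\<not>(s$i = 0 \<and> t$i = 0)" using edge ik s t by blast
  then have "(\<not> s$i = 0 \<and> t$i = 0 \<and> v$i = 0 \<and> w$i = 0) \<or> (s$i = 0 \<and> \<not> t$i = 0 \<and> v$i = 0 \<and> w$i = 0)"
    using cs by blast
  then show ?thesis using o ik by auto
qed

lemma twozero:
  assumes v: "v \<in> T - F" and w: "w \<in> T - F" and ij: "i \<noteq> j" "i \<noteq> k" "j \<noteq> k"
    and z: "v$i = 0" "v$j = 0" "w$i = 0" "w$j = 0"
  shows "v = w"
proof -
  obtain m where m: "m \<noteq> i" "m \<noteq> j" "m \<noteq> k" "(UNIV::4 set) = {i,j,k,m}"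
    using UNIV4[OF ij] by blast
  have vk: "v$k = 1" "w$k = 1" using v w Vk by auto
  have "a \<bullet> v = b" "a \<bullet> w = b" using hyp v w by auto
  then have "(\<Sum>l\<in>{i,j,k,m}. a$l * v$l) = b" "(\<Sum>l\<in>{i,j,k,m}. a$l * w$l) = b"
    unfolding inner_vec_def m(4) by auto
  moreover have "\<And>f. (\<Sum>l\<in>{i,j,k,m}. f l) = f i + f j + f k + (f m::real)"
    using ij m(1-3) by (simp add: add.assoc)
  ultimately have "a$m * v$m + a$k = b" "a$m * w$m + a$k = b"
    using z vk by (simp_all add: algebra_simps)
  then have "a$m * v$m = a$m * w$m" by linarith
  then have vm: "v$m = w$m" using apos by (metis less_irrefl mult_left_cancel)
  have "\<forall>l. v$l = w$l"
  proof
    fix l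
    have "l \<in> {i,j,k,m}" using m(4) by auto
    then show "v$l = w$l" using z vk vm by auto
  qed
  then show ?thesis by (simp add: vec_eq_iff)
qed

lemma comb:
  assumes F3: "F = {s,t,r'}" "s \<noteq> t" "s \<noteq> r'" "t \<noteq> r'"
    and v: "v \<in> T - F" and w: "w \<in> T - F" "v \<noteq> w"
    and i1: "\<not> affine_dependent {s,t,v,w}" and i2: "\<not> affine_dependent {s,r',v,w}"
  shows "\<exists>i z. i \<noteq> k \<and> z \<in> F \<and> v$i = 0 \<and> w$i = 0 \<and> (\<forall>x\<in>F. x$i = (if x = z then 0 else 1))"
proof -
  have m: "s \<in> F" "t \<in> F" "r' \<in> F" using F3 by auto
  obtain i1 where A: "i1 \<noteq> k" "v$i1 = 0" "w$i1 = 0" "(s$i1 = 0 \<and> t$i1 = 1) \<or> (s$i1 = 1 \<and> t$i1 = 0)"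
    using edgeB[OF m(1) m(2) F3(2) v w i1] by blast
  obtain i2 where B: "i2 \<noteq> k" "v$i2 = 0" "w$i2 = 0" "(s$i2 = 0 \<and> r'$i2 = 1) \<or> (s$i2 = 1 \<and> r'$i2 = 0)"
    using edgeB[OF m(1) m(3) F3(3) v w i2] by blast
  have "i1 = i2"
  proof (rule ccontr)
    assume "i1 \<noteq> i2"
    then have "v = w" using twozero[OF v w(1) _ A(1) B(1)] A B by blast
    then show False using w(2) by simp
  qed
  show ?thesis
  proof (cases "s$i1 = 0")
    case True
    then have "t$i1 = 1" "r'$i1 = 1" using A B \<open>i1 = i2\<close> by auto
    then have "\<forall>x\<in>F. x$i1 = (if x = s then 0 else 1)" using True F3 by auto
    then show ?thesis using A m by blast
  next
    case False
    then have "t$i1 = 0" "r'$i1 = 0" using A B \<open>i1 = i2\<close> by auto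
    then show ?thesis using edge A(1) m F3(4) by blast
  qed
qed

lemma pairgood:
  assumes v: "v \<in> T - F" and w: "w \<in> T - F" "v \<noteq> w"
  shows "\<exists>i z. i \<noteq> k \<and> z \<in> F \<and> v$i = 0 \<and> w$i = 0 \<and> (\<forall>x\<in>F. x$i = (if x = z then 0 else 1))"
proof -
  have e1: "{q,p,v,w} = {p,q,v,w}" "{r,p,v,w} = {p,r,v,w}" "{r,q,v,w} = {q,r,v,w}" by auto
  have F1: "F = {q,p,r}" "F = {r,p,q}" using Fdef by auto
  show ?thesis
  proof (cases "affine_dependent {p,q,v,w}")
    case True
    have n1: "\<not> affine_dependent {p,r,v,w}" using not_two_dep[OF Fdef pq pr qr v w] True by blast
    have n2: "\<not> affine_dependent {q,r,v,w}"
      using not_two_dep[OF F1(1) pq[symmetric] qr pr v w] True e1 by auto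
    show ?thesis using comb[OF F1(2) pr[symmetric] qr[symmetric] pq v w] n1 n2 e1 by auto
  next
    case False
    show ?thesis
    proof (cases "affine_dependent {p,r,v,w}")
      case True
      have n2: "\<not> affine_dependent {q,r,v,w}"
        using not_two_dep[OF F1(2) pr[symmetric] qr[symmetric] pq v w] True e1 by auto
      show ?thesis using comb[OF F1(1) pq[symmetric] qr pr v w] False n2 e1 by auto
    next
      case False2: False
      show ?thesis using comb[OF Fdef pq pr qr v w] False False2 by auto
    qed
  qed
qed

lemma main: "B1_facet T \<or> B2_facet T \<or> T = cross_polytope"
proof -
  obtain v where v: "v \<in> T - F" using Vne by blast
  show ?thesis
  proof (cases "T - F = {v}")
    case True
    have "B1_facet T" unfolding B1_facet_def
    proof (intro exI bexI conjI ballI impI)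
      show "v$k = 1" using v Vk by auto
      show "v \<in> T" using v by auto
      fix x assume "x \<in> T" "x$k \<noteq> 0"
      then have "x \<in> T - F" using Fk by auto
      then show "x = v" using True by auto
    qed
    then show ?thesis by simp
  next
    case False
    then obtain w where w: "w \<in> T - F" "v \<noteq> w" using v by blast
    show ?thesis
    proof (cases "\<exists>i z. i \<noteq> k \<and> z \<in> F \<and> (\<forall>x\<in>F. x$i = (if x = z then 0 else 1)) \<and> (\<forall>y\<in>T-F. y$i = 0)")
      case True
      then obtain i z where iz: "i \<noteq> k" "z \<in> F" "\<forall>x\<in>F. x$i = (if x = z then 0 else 1)" "\<forall>y\<in>T-F. y$i = 0"
        by blast
      have "B2_facet T" unfolding B2_facet_def
      proof (intro exI conjI ballI)
        show "i \<noteq> k" by fact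
        fix x assume x: "x \<in> T"
        show "(x$i, x$k) \<in> {(0,0),(1,0),(0,1)}"
        proof (cases "x \<in> F")
          case True
          then show ?thesis using iz(3) Fk by auto
        next
          case False
          then show ?thesis using iz(4) Vk x by auto
        qed
      qed
      then show ?thesis by simp
    next
      case noB2: False
      obtain i1 s1 where P1: "i1 \<noteq> k" "s1 \<in> F" "v$i1 = 0" "w$i1 = 0" "\<forall>x\<in>F. x$i1 = (if x = s1 then 0 else 1)"
        using pairgood[OF v w] by blast
      obtain u where u: "u \<in> T - F" "u$i1 \<noteq> 0" using noB2 P1 by blast
      have uv: "u \<noteq> v" "u \<noteq> w" using u P1 by auto
      obtain i2 s2 where P2: "i2 \<noteq> k" "s2 \<in> F" "u$i2 = 0" "v$i2 = 0" "\<forall>x\<in>F. x$i2 = (if x = s2 then 0 else 1)"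
        using pairgood[OF u(1) v uv(1)] by blast
      obtain i3 s3 where P3: "i3 \<noteq> k" "s3 \<in> F" "u$i3 = 0" "w$i3 = 0" "\<forall>x\<in>F. x$i3 = (if x = s3 then 0 else 1)"
        using pairgood[OF u(1) w(1) uv(2)] by blast
      have i12: "i1 \<noteq> i2" using u P2 by auto
      have i13: "i1 \<noteq> i3" using u P3 by auto
      have i23: "i2 \<noteq> i3"
      proof
        assume "i2 = i3"
        then have "v = w" using twozero[OF v w(1) i12 P1(1) P2(1)] P1 P2 P3 by auto
        then show False using w by simp
      qed
      have s12: "s1 \<noteq> s2"
      proof
        assume e: "s1 = s2"
        have "s1$i1 = 0" using P1(5) P1(2) by auto
        moreover have "s1$i2 = 0" using P2(5) P2(2) e by auto
        ultimately show False using vert P1(1) P2(1) i12 P1(2) by blast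
      qed
      have s13: "s1 \<noteq> s3"
      proof
        assume e: "s1 = s3"
        have "s1$i1 = 0" using P1(5) P1(2) by auto
        moreover have "s1$i3 = 0" using P3(5) P3(2) e by auto
        ultimately show False using vert P1(1) P3(1) i13 P1(2) by blast
      qed
      have s23: "s2 \<noteq> s3"
      proof
        assume e: "s2 = s3"
        have "s2$i2 = 0" using P2(5) P2(2) by auto
        moreover have "s2$i3 = 0" using P3(5) P3(2) e by auto
        ultimately show False using vert P2(1) P3(1) i23 P2(2) by blast
      qed
      have sv: "s1$i1 = 0" "s1$i2 = 1" "s1$i3 = 1" "s2$i1 = 1" "s2$i2 = 0" "s2$i3 = 1"
         "s3$i1 = 1" "s3$i2 = 1" "s3$i3 = 0" "s1$k = 0" "s2$k = 0" "s3$k = 0"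
        using P1 P2 P3 s12 s13 s23 Fk by auto
      have vk: "u$k = 1" "v$k = 1" "w$k = 1" using u v w Vk by auto
      have v3: "v$i3 \<noteq> 0"
      proof
        assume "v$i3 = 0"
        then have "v = w" using twozero[OF v w(1) i13 P1(1) P3(1)] P1 P3 by auto
        then show False using w by simp
      qed
      have w2: "w$i2 \<noteq> 0"
      proof
        assume "w$i2 = 0"
        then have "w = u" using twozero[OF w(1) u(1) i23 P2(1) P3(1)] P2 P3 by auto
        then show False using uv by simp
      qed
      obtain m where m: "m \<noteq> i1" "m \<noteq> i2" "m \<noteq> i3" "(UNIV::4 set) = {i1,i2,i3,m}"
        using UNIV4[OF i12 i13 i23] by blast
      have "k \<in> {i1,i2,i3,m}" using m(4) by blast
      then have "k = m" using P1(1) P2(1) P3(1) by auto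
      have jin: "\<And>j. j = i1 \<or> j = i2 \<or> j = i3 \<or> j = k"
        using m(4) \<open>k = m\<close> by (metis UNIV_I empty_iff insert_iff)
      have ind1: "\<not> affine_dependent (insert s1 {v,w})"
        by (rule indep_insert_coord[where i=k and c=1]) (use vk sv in auto)
      have ind2: "\<not> affine_dependent (insert u (insert s1 {v,w}))"
        by (rule indep_insert_coord[OF ind1, where i=i1 and c=0]) (use sv P1 u in auto)
      have eS: "{s1,u,v,w} = insert u (insert s1 {v,w})" by auto
      have d: "s1 \<noteq> u" "s1 \<noteq> v" "s1 \<noteq> w" using sv vk by auto
      have c4: "card {s1,u,v,w} = 4" using d uv w(2) by auto
      have "{s1,u,v,w} \<subseteq> T" using P1 u v w Fsub by auto
      then have "B_simplex {s1,u,v,w}" using Bs c4 ind2 eS by auto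
      then obtain l where c: "card {x\<in>{s1,u,v,w}. x$l = 0} = 3"
          and o: "\<forall>x\<in>{s1,u,v,w}. x$l \<noteq> 0 \<longrightarrow> x$l = 1"
        unfolding B_simplex_def using c4 by auto
      have cs: "(\<not> s1$l = 0 \<and> u$l = 0 \<and> v$l = 0 \<and> w$l = 0) \<or> (s1$l = 0 \<and> \<not> u$l = 0 \<and> v$l = 0 \<and> w$l = 0) \<or>
         (s1$l = 0 \<and> u$l = 0 \<and> \<not> v$l = 0 \<and> w$l = 0) \<or> (s1$l = 0 \<and> u$l = 0 \<and> v$l = 0 \<and> \<not> w$l = 0)"
        using card4_eq3[of s1 u v w "\<lambda>x. x$l = 0", OF d uv(1) uv(2) w(2) c] .
      have "l = i1"
      proof -
        have "l \<noteq> k" using cs vk by auto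
        moreover have "l \<noteq> i2" using cs sv w2 by auto
        moreover have "l \<noteq> i3" using cs sv v3 by auto
        ultimately show ?thesis using jin by blast
      qed
      then have u1: "u$i1 = 1" using o u(2) by auto
      have sum4: "\<And>f. (\<Sum>l\<in>UNIV. f l) = f i1 + f i2 + f i3 + (f k :: real)"
        using m(1-3) i12 i13 i23 unfolding m(4) \<open>k = m\<close>[symmetric] by (simp add: add.assoc)
      have dot: "\<And>x. a \<bullet> x = a$i1 * x$i1 + a$i2 * x$i2 + a$i3 * x$i3 + a$k * x$k"
        unfolding inner_vec_def sum4 by simp
      have "a \<bullet> s1 = b" "a \<bullet> s2 = b" "a \<bullet> s3 = b" "a \<bullet> u = b"
        using hyp P1 P2 P3 u Fsub by auto
      then have eqs: "a$i2 + a$i3 = b" "a$i1 + a$i3 = b" "a$i1 + a$i2 = b" "a$i1 + a$k = b"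
        unfolding dot using sv vk u1 P2(3) P3(3) by auto
      have av: "a$i1 = b/2" "a$i2 = b/2" "a$i3 = b/2" "a$k = b/2" using eqs by linarith+
      have bpos: "b > 0" using apos av(4) by (metis half_gt_zero_iff)
      have sumT: "x$i1 + x$i2 + x$i3 + x$k = 2" if "x \<in> T" for x
      proof -
        have "a \<bullet> x = b" using hyp that by auto
        then have "b/2 * (x$i1 + x$i2 + x$i3 + x$k) = b" unfolding dot av by (simp add: algebra_simps)
        then have "b * (x$i1 + x$i2 + x$i3 + x$k) = b * 2" by (simp add: field_simps)
        then show ?thesis using bpos by (metis mult_cancel_left less_irrefl)
      qed
      have sub: "T \<subseteq> cross_polytope"
      proof
        fix x assume x: "x \<in> T"
        have s2: "x$i1 + x$i2 + x$i3 + x$k = 2" using sumT x .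
        have s4: "x$1 + x$2 + x$3 + x$4 = x$i1 + x$i2 + x$i3 + x$k"
          using sum4[of "\<lambda>j. x$j"] sum_4[of "\<lambda>j. x$j"] by simp
        have "\<forall>j. x$j = 0 \<or> x$j = 1"
        proof (cases "x \<in> F")
          case True
          have "x$i1 = 0 \<or> x$i1 = 1" "x$i2 = 0 \<or> x$i2 = 1" "x$i3 = 0 \<or> x$i3 = 1" "x$k = 0"
            using P1(5) P2(5) P3(5) Fk True by auto
          then show ?thesis using jin by metis
        next
          case False
          then have xk: "x$k = 1" using Vk x by auto
          have nn: "\<And>j. x$j \<in> \<int> \<and> x$j \<ge> 0" using lat x unfolding lattice_nonneg_def by auto
          have "x$i1 + x$i2 + x$i3 = 1" using s2 xk by simp
          then have "x$i1 \<le> 1" "x$i2 \<le> 1" "x$i3 \<le> 1" using nn[of i1] nn[of i2] nn[of i3] by linarith+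
          then have "x$i1 = 0 \<or> x$i1 = 1" "x$i2 = 0 \<or> x$i2 = 1" "x$i3 = 0 \<or> x$i3 = 1"
            using nn int01 by blast+
          then show ?thesis using jin xk by metis
        qed
        then show "x \<in> cross_polytope" using cross_char2 s2 s4 by simp
      qed
      have six: "{s1,s2,s3,u,v,w} \<subseteq> T" using P1 P2 P3 u v w Fsub by auto
      have "card {s1,s2,s3,u,v,w} = 6"
      proof -
        have dd: "s1 \<noteq> u" "s1 \<noteq> v" "s1 \<noteq> w" "s2 \<noteq> u" "s2 \<noteq> v" "s2 \<noteq> w"
          "s3 \<noteq> u" "s3 \<noteq> v" "s3 \<noteq> w" using sv vk by auto
        show ?thesis using dd s12 s13 s23 uv w(2) by simp
      qed
      then have "6 \<le> card T" using card_mono[OF fin six] by simp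
      moreover have fc: "finite cross_polytope" unfolding cross_polytope_def by simp
      ultimately have "card T = card cross_polytope" using card_cross card_mono[OF fc sub] by simp
      then have "T = cross_polytope" using card_subset_eq[OF fc sub] by simp
      then show ?thesis by simp
    qed
  qed
qed

end


lemma indep_subset_conv:
  fixes F G :: "(real^4) set"
  assumes "\<not> affine_dependent F" "G \<subseteq> F"
  shows "F \<inter> convex hull G = G"
proof
  have "G \<subseteq> convex hull G" by (rule hull_subset)
  then show "G \<subseteq> F \<inter> convex hull G" using assms(2) by simp
  show "F \<inter> convex hull G \<subseteq> G"
  proof
    fix z assume z: "z \<in> F \<inter> convex hull G"
    show "z \<in> G"
    proof (rule ccontr)
      assume "z \<notin> G"
      then have "G \<subseteq> F - {z}" using assms(2) by auto
      then have "convex hull G \<subseteq> convex hull (F - {z})" by (rule hull_mono)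
      also have "\<dots> \<subseteq> affine hull (F - {z})" by (rule convex_hull_subset_affine_hull)
      finally have "convex hull G \<subseteq> affine hull (F - {z})" .
      then have "z \<in> affine hull (F - {z})" using z by auto
      then have "affine_dependent F" unfolding affine_dependent_def using z by auto
      then show False using assms(1) by simp
    qed
  qed
qed

lemma card_UNIV4: "CARD(4) = 4" by simp

theorem lemma2p7:
  fixes \<tau> F :: "(real^4) set"
  assumes "B_facet \<tau>"
    and "internal_V_face \<tau> F"
    and "card F = 3"
    and "\<not> affine_dependent F"
  shows "B1_facet \<tau> \<or> B2_facet \<tau> \<or> \<tau> = cross_polytope"
proof -
  have bf: "finite \<tau> \<and> \<tau> \<subseteq> lattice_nonneg \<and>
     (\<exists>a b. (\<forall>j. a $ j > 0) \<and> affine hull \<tau> = {x. a \<bullet> x = b}) \<and>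
     (\<forall>S. S \<subseteq> \<tau> \<and> card S = 4 \<and> \<not> affine_dependent S \<longrightarrow> B_simplex S)"
    using assms(1) unfolding B_facet_def .
  note fin = conjunct1[OF bf]
  note lat = conjunct1[OF conjunct2[OF bf]]
  note Bs = conjunct2[OF conjunct2[OF conjunct2[OF bf]]]
  note ex = conjunct1[OF conjunct2[OF conjunct2[OF bf]]]
  from ex obtain a b where apos: "\<forall>j. a$j > 0" and ah: "affine hull \<tau> = {x. a \<bullet> x = b}"
    by blast
  have hyp: "\<forall>x\<in>\<tau>. a \<bullet> x = b"
  proof
    fix x assume "x \<in> \<tau>"
    then have "x \<in> affine hull \<tau>" by (rule hull_inc)
    then show "a \<bullet> x = b" using ah by simp
  qed
  have "\<exists>x y z. F = {x,y,z} \<and> x \<noteq> y \<and> y \<noteq> z \<and> x \<noteq> z"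
    using assms(3)[unfolded card_3_iff] .
  then obtain p q r where Fdef: "F = {p,q,r}" and pq: "p \<noteq> q" and qr: "q \<noteq> r" and pr: "p \<noteq> r"
    by (elim exE conjE)
  have Find: "\<not> affine_dependent F" by fact
  have iv: "V_face \<tau> F \<and> (\<forall>G. face_set G F \<and> G \<noteq> {} \<and> G \<noteq> F \<longrightarrow> \<not> V_face \<tau> G)"
    using assms(2) unfolding internal_V_face_def .
  note VF = conjunct1[OF iv]
  note intl = conjunct2[OF iv]
  have adF: "aff_dim F = 2" using aff_dim_affine_independent[OF Find] assms(3) by simp
  obtain I where cI: "int (card I) = aff_dim F + 1" and FI: "F \<subseteq> span ((\<lambda>i. axis i 1) ` I)"
    using VF unfolding V_face_def by blast
  have cI3: "card I = 3" using cI adF by simp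
  have "I \<noteq> UNIV" using cI3 card_UNIV4 by auto
  then obtain k where kI: "k \<notin> I" by auto
  have Fk: "\<forall>x\<in>F. x$k = 0"
  proof
    fix x assume "x \<in> F"
    then have "x \<in> span ((\<lambda>i. axis i 1) ` I)" using FI by blast
    then show "x$k = 0" using kI unfolding span_axes by blast
  qed
  have "face_set F \<tau>" using VF unfolding V_face_def by blast
  then obtain G where G: "G face_of convex hull \<tau>" "F = \<tau> \<inter> G"
    unfolding face_set_def by blast
  have Fsub: "F \<subseteq> \<tau>" using G by auto
  have GF: "G = convex hull F"
  proof
    obtain S' where S': "S' \<subseteq> \<tau>" "G = convex hull S'"
      using face_of_convex_hull_subset[OF finite_imp_compact[OF fin] G(1)] by blast
    have "S' \<subseteq> convex hull S'" by (rule hull_subset)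
    then have "S' \<subseteq> G" using S'(2) by simp
    then have "S' \<subseteq> F" using S'(1) G(2) by auto
    then have "convex hull S' \<subseteq> convex hull F" by (rule hull_mono)
    then show "G \<subseteq> convex hull F" using S'(2) by simp
    have "F \<subseteq> G" using G(2) by auto
    moreover have "convex G" by (rule face_of_imp_convex[OF G(1)])
    ultimately show "convex hull F \<subseteq> G" by (rule hull_minimal)
  qed
  have cF: "convex hull F face_of convex hull \<tau>" using G(1) unfolding GF .
  have tF: "\<tau> \<inter> convex hull F = F" unfolding GF[symmetric] by (rule sym[OF G(2)])
  have ad\<tau>: "aff_dim \<tau> = 3"
  proof -
    have "a \<noteq> 0" using apos by (metis less_irrefl zero_index)
    then have "aff_dim {x. a \<bullet> x = b} = 3" by simp
    then show ?thesis using ah by (metis aff_dim_affine_hull)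
  qed
  have noV: False if GF': "G' \<subseteq> F" "G' \<noteq> {}" "G' \<noteq> F" and cJ: "card J = card G'"
      and GJ: "G' \<subseteq> span ((\<lambda>i. axis i 1) ` J)" for G' J
  proof -
    have iG: "\<not> affine_dependent G'" using affine_independent_subset[OF Find GF'(1)] .
    have c1: "convex hull G' face_of convex hull F"
      apply (subst face_of_convex_hull_affine_independent[OF Find])
      using GF'(1) by blast
    have fs1: "face_set G' F" unfolding face_set_def
      using c1 indep_subset_conv[OF Find GF'(1)] by (intro exI[of _ "convex hull G'"]) simp
    have c2: "convex hull G' face_of convex hull \<tau>" using face_of_trans[OF c1 cF] .
    have sub: "convex hull G' \<subseteq> convex hull F" by (rule hull_mono[OF GF'(1)])
    have "\<tau> \<inter> convex hull G' = \<tau> \<inter> convex hull F \<inter> convex hull G'" using sub by auto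
    then have "\<tau> \<inter> convex hull G' = F \<inter> convex hull G'" using tF by simp
    then have "\<tau> \<inter> convex hull G' = G'" using indep_subset_conv[OF Find GF'(1)] by simp
    then have fs2: "face_set G' \<tau>" unfolding face_set_def using c2
      by (intro exI[of _ "convex hull G'"]) simp
    have "int (card G') = aff_dim G' + 1" using aff_dim_affine_independent[OF iG] .
    then have "V_face \<tau> G'" unfolding V_face_def using fs2 cJ GJ
      by (intro conjI exI[of _ J]) simp_all
    then show False using intl fs1 GF'(2,3) by blast
  qed
  have edge: "\<forall>i x y. i \<noteq> k \<longrightarrow> x \<in> F \<longrightarrow> y \<in> F \<longrightarrow> x \<noteq> y \<longrightarrow> \<not>(x$i = 0 \<and> y$i = 0)"
  proof (intro allI impI notI)
    fix i x y assume h: "i \<noteq> k" "x \<in> F" "y \<in> F" "x \<noteq> y" "x$i = 0 \<and> y$i = 0"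
    have "card (UNIV - {i,k}) = 2"
      using h(1) by (simp add: card_Diff_subset card_UNIV4)
    moreover have "card {x,y} = 2" using h(4) by simp
    moreover have "{x,y} \<subseteq> span ((\<lambda>i. axis i 1) ` (UNIV - {i,k}))"
      using h Fk by (auto simp: span_axes)
    moreover have "{x,y} \<noteq> F"
    proof
      assume "{x,y} = F"
      then have "card F = 2" using h(4) by auto
      then show False using assms(3) by simp
    qed
    ultimately show False using noV[of "{x,y}" "UNIV - {i,k}"] h by auto
  qed
  have vert: "\<forall>i j x. i \<noteq> k \<longrightarrow> j \<noteq> k \<longrightarrow> i \<noteq> j \<longrightarrow> x \<in> F \<longrightarrow> \<not>(x$i = 0 \<and> x$j = 0)"
  proof (intro allI impI notI)
    fix i j x assume h: "i \<noteq> k" "j \<noteq> k" "i \<noteq> j" "x \<in> F" "x$i = 0 \<and> x$j = 0"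
    have "card (UNIV - {i,j,k}) = 1"
      using h(1-3) by (simp add: card_Diff_subset card_UNIV4)
    moreover have "{x} \<subseteq> span ((\<lambda>i. axis i 1) ` (UNIV - {i,j,k}))"
      using h Fk by (auto simp: span_axes)
    moreover have "{x} \<noteq> F" using assms(3) by auto
    ultimately show False using noV[of "{x}" "UNIV - {i,j,k}"] h by auto
  qed
  have zeroF: "v \<in> F" if v: "v \<in> \<tau>" "v$k = 0" for v
  proof -
    have ch: "convex hull \<tau> \<subseteq> {x. 0 \<le> x$k}"
    proof (rule hull_minimal)
      show "\<tau> \<subseteq> {x. 0 \<le> x$k}" using lat unfolding lattice_nonneg_def by auto
      show "convex {x::real^4. 0 \<le> x$k}"
        using convex_halfspace_ge[where a="axis k (1::real) :: real^4" and b=0] by (simp add: inner_axis')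
    qed
    define Gk where "Gk = convex hull \<tau> \<inter> {x. axis k 1 \<bullet> x = 0}"
    have Gkf: "Gk face_of convex hull \<tau>" unfolding Gk_def
      by (rule face_of_Int_supporting_hyperplane_ge) (use ch in \<open>auto simp: inner_axis'\<close>)
    have Gk_eq: "Gk = convex hull \<tau> \<inter> {x. x$k = 0}" unfolding Gk_def by (simp add: inner_axis')
    have cFk: "convex hull F \<subseteq> {x. x$k = 0}"
    proof (rule hull_minimal)
      show "F \<subseteq> {x. x$k = 0}" using Fk by auto
      show "convex {x::real^4. x$k = 0}"
        using convex_hyperplane[where a="axis k (1::real) :: real^4" and b=0] by (simp add: inner_axis')
    qed
    have FGk: "convex hull F \<subseteq> Gk" unfolding Gk_eq using cFk hull_mono[OF Fsub] by blast
    have cFG: "convex hull F face_of Gk" using face_of_subset[OF cF FGk face_of_imp_subset[OF Gkf]] .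
    have "\<exists>x\<in>\<tau>. x$k \<noteq> 0"
    proof (rule ccontr)
      assume "\<not> (\<exists>x\<in>\<tau>. x$k \<noteq> 0)"
      then have "\<tau> \<subseteq> {x. x$k = 0}" by auto
      moreover have "affine {x::real^4. x$k = 0}"
        using affine_hyperplane[where a="axis k (1::real) :: real^4" and b=0] by (simp add: inner_axis')
      ultimately have "affine hull \<tau> \<subseteq> {x. x$k = 0}" by (rule hull_minimal)
      then have sub: "{x. a \<bullet> x = b} \<subseteq> {x. x$k = 0}" using ah by simp
      obtain j :: 4 where jk: "j \<noteq> k" by (metis zero_neq_one)
      define y1 :: "real^4" where "y1 = (b / a$k) *\<^sub>R axis k 1"
      define y2 :: "real^4" where "y2 = y1 + (a$j) *\<^sub>R axis k 1 - (a$k) *\<^sub>R axis j 1"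
      have ak: "a$k \<noteq> 0" using apos by (metis less_irrefl)
      have "a \<bullet> y1 = b" unfolding y1_def using ak by (simp add: inner_axis)
      moreover have "a \<bullet> y2 = b" unfolding y2_def y1_def using ak
        by (simp add: inner_axis inner_diff_right inner_add_right)
      ultimately have "y1$k = 0" "y2$k = 0" using sub by auto
      then have "a$j = 0" using \<open>y1$k = 0\<close> unfolding y2_def using jk by (simp add: axis_def)
      then show False using apos by (metis less_irrefl)
    qed
    then obtain x0 where x0: "x0 \<in> \<tau>" "x0$k \<noteq> 0" by blast
    have "x0 \<in> convex hull \<tau>" using x0(1) by (rule hull_inc)
    moreover have "x0 \<notin> Gk" unfolding Gk_eq using x0(2) by simp
    ultimately have "Gk \<noteq> convex hull \<tau>" by blast
    then have "aff_dim Gk < aff_dim (convex hull \<tau>)"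
      using face_of_aff_dim_lt[OF convex_convex_hull Gkf] by blast
    then have lt3: "aff_dim Gk < 3" using ad\<tau> by (simp add: aff_dim_convex_hull)
    have "convex hull F = Gk"
    proof (rule ccontr)
      assume "convex hull F \<noteq> Gk"
      then have "aff_dim (convex hull F) < aff_dim Gk"
        using face_of_aff_dim_lt[OF face_of_imp_convex[OF Gkf] cFG] by blast
      then show False using lt3 adF by (simp add: aff_dim_convex_hull)
    qed
    moreover have "v \<in> convex hull \<tau>" using v(1) by (rule hull_inc)
    ultimately have "v \<in> convex hull F" unfolding Gk_eq using v(2) by simp
    then have "v \<in> \<tau> \<inter> convex hull F" using v(1) by simp
    then show ?thesis using tF by simp
  qed
  have Vk: "\<forall>v\<in>\<tau>. v \<notin> F \<longrightarrow> v$k = 1"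
  proof (intro ballI impI)
    fix v assume v: "v \<in> \<tau>" "v \<notin> F"
    have vk: "v$k \<noteq> 0" using zeroF v by blast
    have ind: "\<not> affine_dependent (insert v F)"
      by (rule indep_insert_coord[OF Find, where i=k and c=0]) (use Fk vk in auto)
    have c4: "card (insert v F) = 4"
      using v(2) assms(3) Fsub fin by (simp add: finite_subset)
    have "insert v F \<subseteq> \<tau>" using v Fsub by auto
    then have "B_simplex (insert v F)" using Bs c4 ind by blast
    then obtain i where c: "card {x\<in>insert v F. x$i = 0} = 3"
        and o: "\<forall>x\<in>insert v F. x$i \<noteq> 0 \<longrightarrow> x$i = 1"
      unfolding B_simplex_def using c4 by auto
    have d: "v \<noteq> p" "v \<noteq> q" "v \<noteq> r" using v Fdef by auto
    have cs: "(\<not> v$i = 0 \<and> p$i = 0 \<and> q$i = 0 \<and> r$i = 0) \<or> (v$i = 0 \<and> \<not> p$i = 0 \<and> q$i = 0 \<and> r$i = 0) \<or>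
         (v$i = 0 \<and> p$i = 0 \<and> \<not> q$i = 0 \<and> r$i = 0) \<or> (v$i = 0 \<and> p$i = 0 \<and> q$i = 0 \<and> \<not> r$i = 0)"
    proof -
      have c': "card {x\<in>{v,p,q,r}. x$i = 0} = 3" using c Fdef by simp
      show ?thesis using card4_eq3[of v p q r "\<lambda>x. x$i = 0", OF d pq pr qr c'] .
    qed
    have "i = k"
    proof (rule ccontr)
      assume ik: "i \<noteq> k"
      have "\<not>(p$i = 0 \<and> q$i = 0)" "\<not>(p$i = 0 \<and> r$i = 0)" "\<not>(q$i = 0 \<and> r$i = 0)"
        using edge ik pq pr qr unfolding Fdef by blast+
      then show False using cs by blast
    qed
    then show "v$k = 1" using o vk by auto
  qed
  have Vne: "\<tau> - F \<noteq> {}"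
  proof
    assume "\<tau> - F = {}"
    then have "\<tau> = F" using Fsub by auto
    then show False using ad\<tau> adF by simp
  qed
  interpret cfg \<tau> F a b k p q r
    by (rule cfg.intro[OF fin lat apos hyp Bs Fdef pq pr qr Fsub Find Fk edge vert Vk Vne])
  show ?thesis using main .
qed


end
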